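(* Let $q$ be a power of $2$, $c\in\mathbb{F}_q^*$, $f(X)=X(X^{q-1}-c)^{q+1}$ on $\mathbb{F}_{q^2}$, with $a,\beta,g,L_{[u:v]},\mathbb{P}^1$ as in the context. For $L_{[u:v]}\in\mathbb{P}^1$, $g(u,v)=0$ if and only if $c=1$ and $v=0$. Moreover, for each $L_{[u:v]}\in\mathbb{P}^1$ with $g(u,v)\neq0$, the set $L_{[u:v]}\setminus\{0\}$ is the union of exactly $\frac{q-1}{d}$ cycles of length $d$ in $\mathcal{G}(f)$, where $d$ is the multiplicative order of $g(u,v)$ in $\mathbb{F}_q^*$.
   Context: $a\in\mathbb{F}_q$ with $\operatorname{Tr}(a)=1$ (absolute trace to $\mathbb{F}_2$), $\beta\in\mathbb{F}_{q^2}$ with $\beta^2+\beta+a=0$; every element of $\mathbb{F}_{q^2}$ is uniquely $x+y\beta$, $x,y\in\mathbb{F}_q$. For $(x,y)\neq(0,0)$, $g(x,y)=c^2+1+\frac{cy^2}{x^2+xy+y^2a}\in\mathbb{F}_q$, invariant under scaling $(x,y)$ by $\mathbb{F}_q^*$. For $(u,v)\in\mathbb{F}_q^2\setminus\{(0,0)\}$, $L_{[u:v]}=\{\lambda(u+v\beta):\lambda\in\mathbb{F}_q\}$ and $\mathbb{P}^1$ is the set of these $q+1$ lines. $\mathcal{G}(f)$ is the functional graph (vertices $\mathbb{F}_{q^2}$, edges $\langle x,f(x)\rangle$); a cycle of length $n$ consists of distinct $\alpha,f(\alpha),\dots,f^{(n-1)}(\alpha)$ with $f^{(n)}(\alpha)=\alpha$.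 *)

theory Defs
  imports Main
begin

definition subfield_q :: "nat \<Rightarrow> 'a::field set" where
  "subfield_q q = {x. x ^ q = x}"

text \<open>Absolute trace F_q -> F_2 for q = 2^k.\<close>
definition abs_trace :: "nat \<Rightarrow> 'a::field \<Rightarrow> 'a" where
  "abs_trace k x = (\<Sum>i<k. x ^ (2 ^ i))"

definition mult_order :: "'a::field \<Rightarrow> nat" where
  "mult_order x = (LEAST n. 0 < n \<and> x ^ n = 1)"

definition gfun :: "'a::field \<Rightarrow> 'a \<Rightarrow> 'a \<Rightarrow> 'a \<Rightarrow> 'a" where
  "gfun a c x y = c^2 + 1 + c * y^2 / (x^2 + x*y + y^2 * a)"

definition line :: "nat \<Rightarrow> 'a::field \<Rightarrow> 'a \<Rightarrow> 'a \<Rightarrow> 'a set" where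
  "line q \<beta> u v = {l * (u + v * \<beta>) | l. l \<in> subfield_q q}"

definition is_cycle :: "('a \<Rightarrow> 'a) \<Rightarrow> nat \<Rightarrow> 'a set \<Rightarrow> bool" where
  "is_cycle f n C \<longleftrightarrow> (\<exists>\<alpha>. 0 < n \<and> C = {(f ^^ i) \<alpha> | i. i < n}
      \<and> inj_on (\<lambda>i. (f ^^ i) \<alpha>) {..<n} \<and> (f ^^ n) \<alpha> = \<alpha>)"

end

theory Submission
  imports Defs "HOL-Number_Theory.Residues" "HOL-Computational_Algebra.Polynomial" "HOL-Computational_Algebra.Primes"
begin


locale ffsetup =
  fixes k q :: nat and a \<beta> c :: "'a::{field,finite}"
  assumes k1: "1 \<le> k" and qdef: "q = 2 ^ k" and cardU: "card (UNIV :: 'a set) = q ^ 2"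
    and aK: "a \<in> subfield_q q" and tra: "abs_trace k a = 1"
    and beq: "\<beta>^2 + \<beta> + a = 0"
    and cK: "c \<in> subfield_q q" and c0: "c \<noteq> 0"
begin

lemma q2: "q \<ge> 2"
proof -
  have "(2::nat) ^ 1 \<le> 2 ^ k" using k1 by (intro power_increasing) auto
  thus ?thesis using qdef by simp
qed

lemma char2: "CHAR('a) = 2"
proof -
  have pos: "CHAR('a) > 0" by (simp add: finite_imp_CHAR_pos)
  have pr: "prime CHAR('a)" using prime_CHAR_semidom[OF pos] .
  have "CHAR('a) dvd card (UNIV :: 'a set)" by (rule CHAR_dvd_CARD)
  also have "card (UNIV :: 'a set) = 2 ^ (2*k)" using cardU qdef by (metis power_mult mult.commute)
  finally have "CHAR('a) dvd 2 ^ (2*k)" .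
  hence "CHAR('a) dvd 2" using pr prime_dvd_power by blast
  thus ?thesis using pr by (metis prime_nat_iff two_is_prime_nat nat_dvd_not_less not_less_iff_gr_or_eq prime_gt_1_nat)
qed

lemma two0: "(2::'a) = 0"
  using of_nat_CHAR[where 'a='a] char2 by simp

lemma neg_eq: "- (x::'a) = x"
proof -
  have "x + x = 2 * x" by simp
  hence "x + x = 0" using two0 by simp
  thus ?thesis by (simp add: add_eq_0_iff2 eq_neg_iff_add_eq_0)
qed

lemma minus_eq_plus: "(x::'a) - y = x + y"
  using neg_eq[of y] by (metis diff_conv_add_uminus)

lemma frob2: "((x::'a) + y) ^ (2^n) = x^(2^n) + y^(2^n)"
  by (rule freshmans_dream') (auto simp: char2)

lemma frob: "((x::'a) + y) ^ q = x^q + y^q"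
  using frob2 qdef by simp

lemma frob_minus: "((x::'a) - y) ^ q = x^q - y^q"
  by (simp add: minus_eq_plus frob)

lemma sq_add: "((x::'a) + y) ^ 2 = x^2 + y^2"
  using frob2[of x y 1] by simp

lemma fermat: "(x::'a) ^ card (UNIV :: 'a set) = x"
proof (cases "x = 0")
  case False
  have "x * (\<Prod>y\<in>UNIV-{0}. x * y) = x * x ^ (card (UNIV :: 'a set) - 1) * \<Prod>(UNIV-{0})"
    by (simp add: prod.distrib mult_ac)
  also have "x * x ^ (card (UNIV :: 'a set) - 1) = x ^ Suc (card (UNIV :: 'a set) - 1)"
    by (subst power_Suc) auto
  also have "Suc (card (UNIV :: 'a set) - 1) = card (UNIV :: 'a set)"
    using finite_UNIV_card_ge_0[where ?'a = 'a] by simp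
  also have "(\<Prod>y\<in>UNIV-{0}. x * y) = (\<Prod>y\<in>UNIV-{0}. y)"
    by (rule prod.reindex_bij_witness[of _ "\<lambda>y. y / x" "\<lambda>y. x * y"]) (use False in auto)
  finally show ?thesis
    by simp
qed (use finite_UNIV_card_ge_0[where ?'a = 'a] in auto)

lemma fermat2: "((x::'a) ^ q) ^ q = x"
  using fermat[of x] cardU by (simp add: power_mult[symmetric] power2_eq_square)

lemma K_iff: "x \<in> subfield_q q \<longleftrightarrow> x ^ q = x"
  by (simp add: subfield_q_def)

lemma K0: "0 \<in> subfield_q q" using q2 by (simp add: K_iff)
lemma K1: "1 \<in> subfield_q q" by (simp add: K_iff)
lemma Kadd: "(x::'a) \<in> subfield_q q \<Longrightarrow> y \<in> subfield_q q \<Longrightarrow> x + y \<in> subfield_q q"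
  unfolding K_iff using frob by metis
lemma Kmult: "x \<in> subfield_q q \<Longrightarrow> y \<in> subfield_q q \<Longrightarrow> x * y \<in> subfield_q q"
  by (simp add: K_iff power_mult_distrib)
lemma Kdiv: "x \<in> subfield_q q \<Longrightarrow> y \<in> subfield_q q \<Longrightarrow> x / y \<in> subfield_q q"
  by (simp add: K_iff power_divide)
lemma Kpow: "x \<in> subfield_q q \<Longrightarrow> x ^ n \<in> subfield_q q"
  by (induction n) (auto intro: Kmult K1)

lemma beta_pow: "\<beta> ^ (2^i) = \<beta> + (\<Sum>j<i. a ^ (2^j))"
proof (induction i)
  case 0 then show ?case by simp
next
  case (Suc i)
  have b2: "\<beta>^2 = \<beta> + a"
    using beq by (metis add.assoc add_eq_0_iff2 neg_eq)
  have "\<beta> ^ (2 ^ Suc i) = (\<beta> ^ (2^i)) ^ 2" by (simp add: power_mult[symmetric] mult.commute)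
  also have "\<dots> = \<beta>^2 + (\<Sum>j<i. a ^ (2^j)) ^ 2" using Suc by (simp add: sq_add)
  also have "(\<Sum>j<i. a ^ (2^j)) ^ 2 = (\<Sum>j<i. (a ^ (2^j)) ^ 2)"
    by (rule freshmans_dream_sum) (auto simp: char2)
  also have "\<dots> = (\<Sum>j<i. a ^ (2^Suc j))"
    by (simp add: power_mult[symmetric] mult.commute)
  also have "\<beta>^2 + (\<Sum>j<i. a ^ (2^Suc j)) = \<beta> + (\<Sum>j<Suc i. a ^ (2^j))"
    unfolding sum.lessThan_Suc_shift b2 by (simp add: add_ac)
  finally show ?case .
qed

lemma beta_q: "\<beta> ^ q = \<beta> + 1"
  using beta_pow[of k] tra qdef by (simp add: abs_trace_def)

end


context ffsetup begin

lemma K_finite: "finite (subfield_q q :: 'a set)" by simp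

lemma card_K_le: "card (subfield_q q :: 'a set) \<le> q"
proof -
  define p :: "'a poly" where "p = monom 1 q + [:0, -1:]"
  have deg: "degree p = q" unfolding p_def using q2
    by (subst degree_add_eq_left) (auto simp: degree_monom_eq)
  hence "p \<noteq> 0" using q2 by auto
  have "subfield_q q = {x. poly p x = 0}"
    by (auto simp: p_def subfield_q_def poly_monom)
  thus ?thesis using card_poly_roots_bound[OF \<open>p \<noteq> 0\<close>] deg by simp
qed

lemma card_K_ge: "q \<le> card (subfield_q q :: 'a set)"
proof -
  define T where "T = (\<lambda>x::'a. x^q + x)"
  define K where "K = (subfield_q q :: 'a set)"
  have TK: "T x \<in> K" for x
    unfolding T_def K_def K_iff by (simp add: frob fermat2 add.commute)
  have fib: "{x. T x = y} \<subseteq> (\<lambda>z. x0 + z) ` K" if "T x0 = y" for x0 y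
  proof
    fix x assume "x \<in> {x. T x = y}"
    hence "T x = T x0" using that by simp
    hence e: "x^q + x = x0^q + x0" unfolding T_def by simp
    have "(x - x0)^q = x^q - x0^q" by (rule frob_minus)
    also have "\<dots> = x0 - x" using e by (simp add: algebra_simps)
    also have "x0 - x = x - x0" by (metis neg_eq minus_diff_eq)
    finally have "(x - x0)^q = x - x0" .
    hence "x - x0 \<in> K" by (simp add: K_def K_iff)
    thus "x \<in> (\<lambda>z. x0 + z) ` K" by (intro image_eqI[of _ _ "x - x0"]) auto
  qed
  have fibc: "card {x. T x = y} \<le> card K" if hy: "y \<in> T ` UNIV" for y
  proof -
    obtain x0 where "T x0 = y" using hy by blast
    hence "card {x. T x = y} \<le> card ((\<lambda>z. x0 + z) ` K)" using fib by (intro card_mono) auto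
    also have "\<dots> \<le> card K" by (rule card_image_le) (simp add: K_def)
    finally show ?thesis .
  qed
  have "(UNIV :: 'a set) = (\<Union>y\<in>T ` UNIV. {x. T x = y})" by auto
  hence "card (UNIV :: 'a set) = card (\<Union>y\<in>T ` UNIV. {x. T x = y})" by simp
  also have "\<dots> \<le> (\<Sum>y\<in>T ` UNIV. card {x. T x = y})"
    by (rule card_UN_le) simp
  also have "\<dots> \<le> (\<Sum>y\<in>T ` UNIV. card K)" by (intro sum_mono) (use fibc in auto)
  also have "\<dots> = card (T ` UNIV) * card K" by simp
  also have "\<dots> \<le> card K * card K" using TK by (intro mult_right_mono card_mono) (auto simp: K_def)
  finally have "q * q \<le> card K * card K" using cardU by (simp add: power2_eq_square)
  hence "q \<le> card K"
  proof (rule contrapos_pp)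
    assume "\<not> q \<le> card K"
    hence "card K < q" by simp
    hence "card K * card K < q * q" by (intro mult_strict_mono) auto
    thus "\<not> q * q \<le> card K * card K" by simp
  qed
  thus ?thesis unfolding K_def .
qed

lemma card_K: "card (subfield_q q :: 'a set) = q"
  using card_K_le card_K_ge by simp

end



locale lsetup = ffsetup k q a \<beta> c for k q and a \<beta> c :: "'a::{field,finite}" +
  fixes u v :: 'a
  assumes uK: "u \<in> subfield_q q" and vK: "v \<in> subfield_q q" and uv0: "(u, v) \<noteq> (0, 0)"
begin

definition w where "w = u + v * \<beta>"
definition W where "W = w + v"
definition g where "g = gfun a c u v"

lemma uq: "u ^ q = u" using uK K_iff by blast
lemma vq: "v ^ q = v" using vK K_iff by blast
lemma cq: "c ^ q = c" using cK K_iff by blast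
lemma aq: "a ^ q = a" using aK K_iff by blast

lemma wq: "w ^ q = W"
  unfolding w_def W_def by (simp add: frob power_mult_distrib uq vq beta_q algebra_simps)

lemma Wq: "W ^ q = w"
proof -
  have "W ^ q = w ^ q + v ^ q" unfolding W_def by (rule frob)
  also have "\<dots> = w + (v + v)" by (simp add: wq vq W_def add_ac)
  also have "v + v = 0" using neg_eq[of v] by (metis add.right_inverse)
  finally show ?thesis by simp
qed

lemma w_nz: "w \<noteq> 0"
proof
  assume w0: "w = 0"
  hence "W = 0" using wq q2 by (metis zero_power neq0_conv not_numeral_le_zero)
  hence "v = 0" using w0 by (simp add: W_def)
  moreover have "u + v*\<beta> = 0" using w0 by (simp add: w_def)
  ultimately have "u = 0" by simp
  thus False using uv0 \<open>v = 0\<close> by simp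
qed

lemma W_nz: "W \<noteq> 0"
  using w_nz wq by (metis power_not_zero)

lemma b2: "\<beta>^2 = \<beta> + a"
  using beq by (metis add.assoc add_eq_0_iff2 neg_eq)

lemma vv: "v + v = 0" using neg_eq[of v] by (metis add.right_inverse)

lemma norm_eq: "w * W = u^2 + u*v + v^2 * a"
proof -
  have "w * W = u^2 + (u*v*\<beta> + u*v*\<beta>) + u*v + v^2*(\<beta>^2 + \<beta>)"
    unfolding W_def w_def by (simp add: algebra_simps power2_eq_square)
  also have "u*v*\<beta> + u*v*\<beta> = 0" using neg_eq[of "u*v*\<beta>"] by (metis add.right_inverse)
  also have "\<beta>^2 + \<beta> = a" using b2 neg_eq[of \<beta>] by (metis add.assoc add.right_inverse add_0 add.commute)
  finally show ?thesis by simp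
qed

lemma key: "(w + c*W) * (W + c*w) = (w*W) * g"
proof -
  have NZ: "w * W \<noteq> 0" using w_nz W_nz by simp
  have "(w + c*W) * (W + c*w) = (1 + c^2) * (w*W) + c * (w + W)^2 - c * (2 * w * W)"
    by (simp add: algebra_simps power2_eq_square)
  also have "w + W = v" unfolding W_def using vv
    by (metis add.assoc add.commute add.right_inverse add_0 neg_eq)
  also have "c * (2 * w * W) = 0" by (simp add: two0)
  finally have "(w + c*W) * (W + c*w) = (1 + c^2) * (w*W) + c * v^2" by simp
  also have "\<dots> = (w*W) * g"
    unfolding g_def gfun_def norm_eq[symmetric] using NZ by (simp add: field_simps)
  finally show ?thesis .
qed

lemma gK: "g \<in> subfield_q q"
  unfolding g_def gfun_def
  by (intro Kadd Kmult Kdiv Kpow K1 cK uK vK aK)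

lemma f_line:
  assumes lK: "l \<in> subfield_q q"
  shows "(l*w) * ((l*w) ^ (q - 1) - c) ^ (q + 1) = (g * l) * w"
proof (cases "l = 0")
  case True then show ?thesis by simp
next
  case False
  have lq1: "l ^ (q - 1) = 1"
  proof -
    have "l * l ^ (q - 1) = l ^ q" using q2 by (metis Suc_diff_1 less_le_trans pos2 power_Suc)
    also have "\<dots> = l" using lK K_iff by blast
    finally show ?thesis using False by simp
  qed
  define t where "t = w ^ (q - 1)"
  have wt: "w * t = W" unfolding t_def using wq q2
    by (metis Suc_diff_1 less_le_trans pos2 power_Suc)
  have tqW: "t ^ q * W = w"
  proof -
    have "t ^ q * W = t ^ q * w ^ q" by (simp add: wq)
    also have "\<dots> = (w * t) ^ q" by (simp add: power_mult_distrib mult.commute)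
    finally show ?thesis using wt Wq by simp
  qed
  have "(l*w) ^ (q - 1) = t" by (simp only: power_mult_distrib lq1 t_def mult_1_left)
  hence "(l*w) * ((l*w) ^ (q - 1) - c) ^ (q + 1) = l * w * ((t - c) ^ q * (t - c))" by simp
  also have "(t - c) ^ q = t ^ q + c" using frob[of t c] cq by (simp add: minus_eq_plus)
  also have "t - c = t + c" by (rule minus_eq_plus)
  finally have e1: "(l*w) * ((l*w) ^ (q - 1) - c) ^ (q + 1) = l * w * ((t ^ q + c) * (t + c))" .
  have "W * (l * w * ((t ^ q + c) * (t + c))) = l * ((t^q * W + c * W) * (w * t + c * w))"
    by (simp add: algebra_simps)
  also have "\<dots> = l * ((w + c*W) * (W + c*w))" using tqW wt by simp
  also have "\<dots> = W * ((g * l) * w)" using key by (simp add: algebra_simps)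
  finally have "W * (l * w * ((t ^ q + c) * (t + c))) = W * ((g * l) * w)" .
  hence h: "l * w * ((t ^ q + c) * (t + c)) = (g * l) * w" using W_nz by (metis mult_left_cancel)
  show ?thesis using e1 h by (rule trans)
qed

lemma g_zero: "g = 0 \<longleftrightarrow> c = 1 \<and> v = 0"
proof
  assume "c = 1 \<and> v = 0"
  thus "g = 0" unfolding g_def gfun_def using two0 by simp
next
  assume g0: "g = 0"
  hence "(w + c*W) * (W + c*w) = 0" using key by simp
  hence "w = c * W \<and> W = c * w"
  proof (elim disjE[OF iffD1[OF mult_eq_0_iff]])
    assume h: "w + c*W = 0"
    hence h1: "w = c * W" by (metis add_eq_0_iff2 neg_eq)
    hence "w ^ q = (c * W) ^ q" by simp
    hence "W = c * w" by (simp add: wq Wq power_mult_distrib cq)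
    thus ?thesis using h1 by simp
  next
    assume h: "W + c*w = 0"
    hence h1: "W = c * w" by (metis add_eq_0_iff2 neg_eq)
    hence "W ^ q = (c * w) ^ q" by simp
    hence "w = c * W" by (simp add: wq Wq power_mult_distrib cq)
    thus ?thesis using h1 by simp
  qed
  hence e: "w = c * c * w" and e2: "W = c * w" by (metis mult.assoc)+
  hence "c * c = 1" using w_nz by (metis mult_cancel_right2)
  hence "(c + 1)^2 = 1 + 1" using sq_add[of c 1] by (simp add: power2_eq_square)
  hence "(c + 1)^2 = 0" by (metis one_add_one two0)
  hence c1: "c = 1" by (metis add_eq_0_iff2 neg_eq power_not_zero zero_neq_numeral)
  hence "W = w" using e2 by simp
  hence "v = 0" unfolding W_def by simp
  thus "c = 1 \<and> v = 0" using c1 by simp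
qed

end



context lsetup begin

definition F where "F = (\<lambda>x::'a. x * (x ^ (q - 1) - c) ^ (q + 1))"

lemma iterF: "l \<in> subfield_q q \<Longrightarrow> (F ^^ i) (l * w) = (g ^ i * l) * w"
proof (induction i)
  case 0 then show ?case by simp
next
  case (Suc i)
  have "g ^ i * l \<in> subfield_q q" by (intro Kmult Kpow gK Suc.prems)
  hence "F ((g ^ i * l) * w) = (g * (g ^ i * l)) * w" unfolding F_def by (rule f_line)
  thus ?case using Suc by (simp add: mult.assoc)
qed

context
  assumes gnz: "g \<noteq> 0"
begin

lemma gq1: "g ^ (q - 1) = 1"
proof -
  have "g * g ^ (q - 1) = g ^ q" using q2 by (metis Suc_diff_1 less_le_trans pos2 power_Suc)
  also have "\<dots> = g" using gK K_iff by blast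
  finally show ?thesis using gnz by simp
qed

definition d where "d = mult_order g"

lemma d_props: "0 < d \<and> g ^ d = 1"
proof -
  have "\<exists>n. 0 < n \<and> g ^ n = 1" using gq1 q2 by (intro exI[of _ "q - 1"]) auto
  thus ?thesis unfolding d_def mult_order_def by (rule LeastI_ex)
qed

lemma dpos: "0 < d" and gd: "g ^ d = 1" using d_props by auto

lemma gmin: "0 < n \<Longrightarrow> n < d \<Longrightarrow> g ^ n \<noteq> 1"
  unfolding d_def mult_order_def using not_less_Least by blast

lemma ginj_aux: "i < j \<Longrightarrow> j < d \<Longrightarrow> g ^ i \<noteq> g ^ j"
proof
  assume ij: "i < j" "j < d" and e: "g ^ i = g ^ j"
  have "g ^ j = g ^ i * g ^ (j - i)" using ij by (simp add: power_add[symmetric])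
  hence "g ^ (j - i) = 1" using e gnz by simp
  thus False using gmin[of "j - i"] ij by simp
qed

lemma ginj: "i < d \<Longrightarrow> j < d \<Longrightarrow> g ^ i = g ^ j \<Longrightarrow> i = j"
  using ginj_aux by (metis linorder_neqE_nat)

lemma gmod: "g ^ n = g ^ (n mod d)"
proof -
  have "g ^ n = g ^ (d * (n div d) + n mod d)" by simp
  also have "\<dots> = (g ^ d) ^ (n div d) * g ^ (n mod d)" by (simp only: power_add power_mult)
  also have "\<dots> = g ^ (n mod d)" by (simp add: gd)
  finally show ?thesis .
qed

definition orb where "orb l = {(F ^^ i) (l * w) | i. i < d}"

lemma orb_eq: "l \<in> subfield_q q \<Longrightarrow> orb l = {g ^ n * l * w | n. True}"
proof -
  assume lK: "l \<in> subfield_q q"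
  show ?thesis
  proof (intro equalityI subsetI)
    fix x assume "x \<in> orb l"
    then show "x \<in> {g ^ n * l * w | n. True}" unfolding orb_def using iterF[OF lK] by auto
  next
    fix x assume "x \<in> {g ^ n * l * w | n. True}"
    then obtain n where "x = g ^ n * l * w" by auto
    hence "x = (F ^^ (n mod d)) (l * w)" using iterF[OF lK] gmod by simp
    moreover have "n mod d < d" using dpos by simp
    ultimately show "x \<in> orb l" unfolding orb_def by blast
  qed
qed

lemma orb_sub: "l \<in> subfield_q q \<Longrightarrow> m = g ^ p * l \<Longrightarrow> orb m \<subseteq> orb l"
proof -
  assume lK: "l \<in> subfield_q q" and m: "m = g ^ p * l"
  have mK: "m \<in> subfield_q q" unfolding m by (intro Kmult Kpow gK lK)
  show ?thesis
  proof
    fix x assume "x \<in> orb m"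
    then obtain n where "x = g ^ n * m * w" using orb_eq[OF mK] by auto
    hence "x = g ^ (n + p) * l * w" unfolding m by (simp add: power_add mult.assoc)
    thus "x \<in> orb l" using orb_eq[OF lK] by auto
  qed
qed

lemma orb_cycle: "l \<in> subfield_q q \<Longrightarrow> l \<noteq> 0 \<Longrightarrow> is_cycle F d (orb l)"
  unfolding is_cycle_def
proof (intro exI[of _ "l * w"] conjI)
  assume lK: "l \<in> subfield_q q" and l0: "l \<noteq> 0"
  show "0 < d" by (rule dpos)
  show "orb l = {(F ^^ i) (l * w) | i. i < d}" by (simp add: orb_def)
  show "inj_on (\<lambda>i. (F ^^ i) (l * w)) {..<d}"
  proof (rule inj_onI)
    fix i j assume "i \<in> {..<d}" "j \<in> {..<d}" "(F ^^ i) (l * w) = (F ^^ j) (l * w)"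
    hence "i < d" "j < d" "g ^ i = g ^ j" using iterF[OF lK] l0 w_nz by auto
    thus "i = j" by (rule ginj)
  qed
  show "(F ^^ d) (l * w) = l * w" using iterF[OF lK] gd by simp
qed

lemma orb_card: "l \<in> subfield_q q \<Longrightarrow> l \<noteq> 0 \<Longrightarrow> card (orb l) = d"
proof -
  assume lK: "l \<in> subfield_q q" and l0: "l \<noteq> 0"
  have "orb l = (\<lambda>i. (F ^^ i) (l * w)) ` {..<d}" unfolding orb_def by auto
  moreover have "inj_on (\<lambda>i. (F ^^ i) (l * w)) {..<d}"
    using orb_cycle[OF lK l0] unfolding is_cycle_def
  proof (intro inj_onI)
    fix i j assume "i \<in> {..<d}" "j \<in> {..<d}" "(F ^^ i) (l * w) = (F ^^ j) (l * w)"
    hence "i < d" "j < d" "g ^ i = g ^ j" using iterF[OF lK] l0 w_nz by auto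
    thus "i = j" by (rule ginj)
  qed
  ultimately show ?thesis by (simp add: card_image)
qed

definition SS where "SS = orb ` (subfield_q q - {0})"

lemma SS_union: "\<Union>SS = line q \<beta> u v - {0}"
proof (intro equalityI subsetI)
  fix x assume "x \<in> \<Union>SS"
  then obtain l where lK: "l \<in> subfield_q q" and l0: "l \<noteq> 0" and x: "x \<in> orb l"
    unfolding SS_def by auto
  then obtain n where xe: "x = g ^ n * l * w" using orb_eq by auto
  have "g ^ n * l \<in> subfield_q q" by (intro Kmult Kpow gK lK)
  moreover have "x \<noteq> 0" using xe gnz l0 w_nz by simp
  ultimately show "x \<in> line q \<beta> u v - {0}" unfolding line_def xe w_def by auto
next
  fix x assume "x \<in> line q \<beta> u v - {0}"
  then obtain l where lK: "l \<in> subfield_q q" and x: "x = l * w" and x0: "x \<noteq> 0"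
    unfolding line_def w_def by auto
  have l0: "l \<noteq> 0" using x x0 by auto
  have "x \<in> orb l" unfolding orb_eq[OF lK] x by (intro CollectI exI[of _ 0]) simp
  thus "x \<in> \<Union>SS" unfolding SS_def using lK l0 by auto
qed

lemma ginv: "g ^ (j * (d - 1)) * g ^ j = 1"
proof -
  have "j * (d - 1) + j = d * j" using dpos by (cases d) auto
  hence "g ^ (j * (d - 1)) * g ^ j = g ^ (d * j)" by (metis power_add)
  also have "\<dots> = 1" by (simp add: power_mult gd)
  finally show ?thesis .
qed

lemma orb_rel: "l \<in> subfield_q q \<Longrightarrow> m \<in> subfield_q q \<Longrightarrow> g ^ i * l = g ^ j * m \<Longrightarrow> orb m \<subseteq> orb l"
proof -
  assume lK: "l \<in> subfield_q q" and mK: "m \<in> subfield_q q" and e: "g ^ i * l = g ^ j * m"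
  have "g ^ (j * (d - 1)) * (g ^ i * l) = g ^ (j * (d - 1)) * (g ^ j * m)" using e by simp
  also have "\<dots> = (g ^ (j * (d - 1)) * g ^ j) * m" by (simp only: mult.assoc)
  also have "\<dots> = m" by (simp only: ginv mult_1_left)
  finally have "g ^ (j * (d - 1)) * (g ^ i * l) = m" .
  hence "m = g ^ (j * (d - 1) + i) * l" by (simp add: power_add mult.assoc)
  thus ?thesis using orb_sub[OF lK] by blast
qed

lemma line_img: "line q \<beta> u v - {0} = (\<lambda>l. l * w) ` (subfield_q q - {0})"
  unfolding line_def w_def[symmetric] using w_nz by auto

lemma SS_card: "card SS = (q - 1) div d"
proof -
  have fin: "finite SS" unfolding SS_def by simp
  have disj: "\<forall>c1\<in>SS. \<forall>c2\<in>SS. c1 \<noteq> c2 \<longrightarrow> c1 \<inter> c2 = {}"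
  proof (intro ballI impI)
    fix c1 c2 assume "c1 \<in> SS" "c2 \<in> SS" "c1 \<noteq> c2"
    then obtain l m where lK: "l \<in> subfield_q q" and mK: "m \<in> subfield_q q"
      and c1: "c1 = orb l" and c2: "c2 = orb m" unfolding SS_def by auto
    show "c1 \<inter> c2 = {}"
    proof (rule ccontr)
      assume "c1 \<inter> c2 \<noteq> {}"
      then obtain x where "x \<in> orb l" "x \<in> orb m" using c1 c2 by auto
      then obtain i j where "g ^ i * l * w = g ^ j * m * w" using orb_eq lK mK by auto
      hence e: "g ^ i * l = g ^ j * m" using w_nz by simp
      have "orb m \<subseteq> orb l" using orb_rel[OF lK mK e] .
      moreover have "orb l \<subseteq> orb m" using orb_rel[OF mK lK e[symmetric]] .
      ultimately show False using c1 c2 \<open>c1 \<noteq> c2\<close> by auto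
    qed
  qed
  have cards: "\<forall>c\<in>SS. card c = d" unfolding SS_def using orb_card by auto
  have "d * card SS = card (\<Union>SS)"
    by (rule card_partition) (use fin cards disj in auto)
  also have "\<dots> = card ((\<lambda>l. l * w) ` (subfield_q q - {0}))" using SS_union line_img by simp
  also have "\<dots> = card (subfield_q q - {0::'a})"
    by (intro card_image inj_onI) (use w_nz in auto)
  also have "\<dots> = q - 1" using card_K K0 by (subst card_Diff_singleton) auto
  finally have "d * card SS = q - 1" .
  thus ?thesis using dpos by (metis nonzero_mult_div_cancel_left less_not_refl2)
qed

end
end


theorem mainTheorem9:
  fixes k q :: nat and a \<beta> c :: "'a::{field,finite}"
  assumes "1 \<le> k" and "q = 2 ^ k" and "card (UNIV :: 'a set) = q ^ 2"
    and "a \<in> subfield_q q" and "abs_trace k a = 1"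
    and "\<beta>^2 + \<beta> + a = 0"
    and "c \<in> subfield_q q" and "c \<noteq> 0"
  defines "f \<equiv> (\<lambda>x::'a. x * (x ^ (q - 1) - c) ^ (q + 1))"
  shows "\<forall>u \<in> subfield_q q. \<forall>v \<in> subfield_q q. (u, v) \<noteq> (0, 0) \<longrightarrow>
           ((gfun a c u v = 0 \<longleftrightarrow> c = 1 \<and> v = 0) \<and>
            (gfun a c u v \<noteq> 0 \<longrightarrow>
              (\<exists>S. (\<forall>C\<in>S. is_cycle f (mult_order (gfun a c u v)) C)
                 \<and> \<Union>S = line q \<beta> u v - {0}
                 \<and> card S = (q - 1) div mult_order (gfun a c u v))))"
proof (intro ballI impI)
  fix u v :: 'a assume uK: "u \<in> subfield_q q" and vK: "v \<in> subfield_q q" and uv0: "(u, v) \<noteq> (0, 0)"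
  interpret L: lsetup k q a \<beta> c u v
    using assms(1-8) uK vK uv0 by unfold_locales auto
  have Fe: "f = L.F" unfolding f_def L.F_def by simp
  have gg: "gfun a c u v = L.g" by (simp add: L.g_def)
  show "(gfun a c u v = 0 \<longleftrightarrow> c = 1 \<and> v = 0) \<and>
            (gfun a c u v \<noteq> 0 \<longrightarrow>
              (\<exists>S. (\<forall>C\<in>S. is_cycle f (mult_order (gfun a c u v)) C)
                 \<and> \<Union>S = line q \<beta> u v - {0}
                 \<and> card S = (q - 1) div mult_order (gfun a c u v)))"
  proof (intro conjI impI)
    show "gfun a c u v = 0 \<longleftrightarrow> c = 1 \<and> v = 0" using gg L.g_zero by simp
  next
    assume "gfun a c u v \<noteq> 0"
    hence gnz: "L.g \<noteq> 0" using gg by simp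
    have md: "mult_order (gfun a c u v) = L.d" using L.d_def gnz gg by metis
    show "\<exists>S. (\<forall>C\<in>S. is_cycle f (mult_order (gfun a c u v)) C)
                 \<and> \<Union>S = line q \<beta> u v - {0}
                 \<and> card S = (q - 1) div mult_order (gfun a c u v)"
    proof (intro exI[of _ L.SS] conjI ballI)
      fix C assume "C \<in> L.SS"
      then obtain l where "l \<in> subfield_q q" "l \<noteq> 0" "C = L.orb l" using L.SS_def[OF gnz] by auto
      thus "is_cycle f (mult_order (gfun a c u v)) C" using L.orb_cycle[OF gnz] Fe md by simp
    next
      show "\<Union>L.SS = line q \<beta> u v - {0}" using L.SS_union[OF gnz] .
    next
      show "card L.SS = (q - 1) div mult_order (gfun a c u v)" using L.SS_card[OF gnz] md by simp
    qed
  qed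
qed

end
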